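(* Let $A$ be a finite skew brace with $(A,+)$ abelian such that $\Theta(A)$ has exactly one vertex. Then $A$ is isomorphic to one of: (1) $\mathbb{Z}/4\mathbb{Z}$ with its usual addition and $x\circ y=x+y+2xy$; (2) $\mathbb{Z}/2\mathbb{Z}\times\mathbb{Z}/2\mathbb{Z}$ with componentwise addition and $(x_1,y_1)\circ(x_2,y_2)=(x_1+x_2+y_1y_2,\,y_1+y_2)$; (3) $\mathbb{Z}/2\mathbb{Z}\times\mathbb{Z}/4\mathbb{Z}$ with componentwise addition and $(x_1,y_1)\circ(x_2,y_2)=\big(x_1+x_2+\varepsilon(y_1)y_2,\,y_1+y_2+2y_1y_2\big)$, where $\varepsilon(y_1)=0$ if $y_1\in\{0,1\}$ and $\varepsilon(y_1)=1$ if $y_1\in\{2,3\}$, and $\varepsilon(y_1)y_2$ is computed in $\mathbb{Z}/2\mathbb{Z}$.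
   Context: A skew brace is a triple $(A,+,\circ)$ where $(A,+)$ and $(A,\circ)$ are groups with $a\circ(b+c)=a\circ b-a+a\circ c$. $\lambda_a(b)=-a+a\circ b$; $\theta_{(a,b)}(c)=a+\lambda_b(c)-a$ defines an action of $(A,+)\rtimes_\lambda(A,\circ)$ on $(A,+)$ by automorphisms. $\Theta(A)$ is the graph whose vertices are the $\theta$-orbits of size $>1$, two distinct vertices $L_1,L_2$ adjacent iff $\gcd(|L_1|,|L_2|)\ne1$. *)

theory Defs
  imports "HOL-Algebra.Group"
begin

text \<open>A skew brace is given by two group structures on the same carrier:
  P is (A,+) (written multiplicatively in HOL-Algebra), C is (A,\<circ>).\<close>

definition skew_brace :: "'a monoid \<Rightarrow> 'a monoid \<Rightarrow> bool" where
  "skew_brace P C \<longleftrightarrow> group P \<and> group C \<and> carrier C = carrier P \<and>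
     (\<forall>a\<in>carrier P. \<forall>b\<in>carrier P. \<forall>c\<in>carrier P.
        a \<otimes>\<^bsub>C\<^esub> (b \<otimes>\<^bsub>P\<^esub> c)
          = ((a \<otimes>\<^bsub>C\<^esub> b) \<otimes>\<^bsub>P\<^esub> inv\<^bsub>P\<^esub> a) \<otimes>\<^bsub>P\<^esub> (a \<otimes>\<^bsub>C\<^esub> c))"

definition brace_lambda :: "'a monoid \<Rightarrow> 'a monoid \<Rightarrow> 'a \<Rightarrow> 'a \<Rightarrow> 'a" where
  "brace_lambda P C a b = inv\<^bsub>P\<^esub> a \<otimes>\<^bsub>P\<^esub> (a \<otimes>\<^bsub>C\<^esub> b)"

definition brace_theta :: "'a monoid \<Rightarrow> 'a monoid \<Rightarrow> 'a \<Rightarrow> 'a \<Rightarrow> 'a \<Rightarrow> 'a" where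
  "brace_theta P C a b c = (a \<otimes>\<^bsub>P\<^esub> brace_lambda P C b c) \<otimes>\<^bsub>P\<^esub> inv\<^bsub>P\<^esub> a"

text \<open>Orbit of c under the theta-action of (A,+) \<rtimes> (A,o); the image of the action
  is a group of permutations, so the orbit is the set of all theta_(a,b)(c).\<close>
definition theta_orbit :: "'a monoid \<Rightarrow> 'a monoid \<Rightarrow> 'a \<Rightarrow> 'a set" where
  "theta_orbit P C c = {brace_theta P C a b c | a b. a \<in> carrier P \<and> b \<in> carrier P}"

definition theta_vertices :: "'a monoid \<Rightarrow> 'a monoid \<Rightarrow> 'a set set" where
  "theta_vertices P C = {L. L \<in> theta_orbit P C ` carrier P \<and> card L > 1}"

definition brace_iso ::
  "'a monoid \<Rightarrow> 'a monoid \<Rightarrow> 'b monoid \<Rightarrow> 'b monoid \<Rightarrow> bool" where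
  "brace_iso P C P' C' \<longleftrightarrow> (\<exists>f. bij_betw f (carrier P) (carrier P') \<and>
     (\<forall>x\<in>carrier P. \<forall>y\<in>carrier P.
        f (x \<otimes>\<^bsub>P\<^esub> y) = f x \<otimes>\<^bsub>P'\<^esub> f y \<and>
        f (x \<otimes>\<^bsub>C\<^esub> y) = f x \<otimes>\<^bsub>C'\<^esub> f y))"

definition Z4_add :: "int monoid" where
  "Z4_add = \<lparr>carrier = {0..3}, mult = (\<lambda>x y. (x + y) mod 4), one = 0\<rparr>"
definition Z4_circ :: "int monoid" where
  "Z4_circ = \<lparr>carrier = {0..3}, mult = (\<lambda>x y. (x + y + 2*x*y) mod 4), one = 0\<rparr>"

definition Z2Z2_add :: "(int \<times> int) monoid" where
  "Z2Z2_add = \<lparr>carrier = {0..1} \<times> {0..1},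
     mult = (\<lambda>(x1,y1) (x2,y2). ((x1 + x2) mod 2, (y1 + y2) mod 2)), one = (0,0)\<rparr>"
definition Z2Z2_circ :: "(int \<times> int) monoid" where
  "Z2Z2_circ = \<lparr>carrier = {0..1} \<times> {0..1},
     mult = (\<lambda>(x1,y1) (x2,y2). ((x1 + x2 + y1*y2) mod 2, (y1 + y2) mod 2)), one = (0,0)\<rparr>"

definition eps4 :: "int \<Rightarrow> int" where
  "eps4 y = (if y \<in> {0,1} then 0 else 1)"
definition Z2Z4_add :: "(int \<times> int) monoid" where
  "Z2Z4_add = \<lparr>carrier = {0..1} \<times> {0..3},
     mult = (\<lambda>(x1,y1) (x2,y2). ((x1 + x2) mod 2, (y1 + y2) mod 4)), one = (0,0)\<rparr>"
definition Z2Z4_circ :: "(int \<times> int) monoid" where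
  "Z2Z4_circ = \<lparr>carrier = {0..1} \<times> {0..3},
     mult = (\<lambda>(x1,y1) (x2,y2). ((x1 + x2 + eps4 y1 * y2) mod 2, (y1 + y2 + 2*y1*y2) mod 4)),
     one = (0,0)\<rparr>"

end

theory Submission
  imports Defs
begin

lemma iso_from:
  fixes P C :: "'a monoid" and P' C' :: "'b monoid"
  assumes bij: "bij_betw \<psi> S (carrier P)" and SP: "carrier P' = S"
  and cl: "\<And>p q. p \<in> S \<Longrightarrow> q \<in> S \<Longrightarrow> p \<otimes>\<^bsub>P'\<^esub> q \<in> S \<and> p \<otimes>\<^bsub>C'\<^esub> q \<in> S"
  and hp: "\<And>p q. p \<in> S \<Longrightarrow> q \<in> S \<Longrightarrow> \<psi> (p \<otimes>\<^bsub>P'\<^esub> q) = \<psi> p \<otimes>\<^bsub>P\<^esub> \<psi> q"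
  and hc: "\<And>p q. p \<in> S \<Longrightarrow> q \<in> S \<Longrightarrow> \<psi> (p \<otimes>\<^bsub>C'\<^esub> q) = \<psi> p \<otimes>\<^bsub>C\<^esub> \<psi> q"
  shows "brace_iso P C P' C'"
proof -
  let ?g = "inv_into S \<psi>"
  have inj: "inj_on \<psi> S" using bij bij_betw_def by auto
  have b2: "bij_betw ?g (carrier P) (carrier P')" using bij_betw_inv_into[OF bij] SP by simp
  have "\<forall>x\<in>carrier P. \<forall>y\<in>carrier P. ?g (x \<otimes>\<^bsub>P\<^esub> y) = ?g x \<otimes>\<^bsub>P'\<^esub> ?g y \<and>
        ?g (x \<otimes>\<^bsub>C\<^esub> y) = ?g x \<otimes>\<^bsub>C'\<^esub> ?g y"
  proof (intro ballI)
    fix x y assume x: "x \<in> carrier P" and y: "y \<in> carrier P"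
    obtain p where p: "p \<in> S" "x = \<psi> p" using x bij by (metis bij_betw_imp_surj_on imageE)
    obtain q where q: "q \<in> S" "y = \<psi> q" using y bij by (metis bij_betw_imp_surj_on imageE)
    have "?g (x \<otimes>\<^bsub>P\<^esub> y) = p \<otimes>\<^bsub>P'\<^esub> q" using hp[OF p(1) q(1)] p q cl[OF p(1) q(1)] inv_into_f_f[OF inj] by metis
    moreover have "?g (x \<otimes>\<^bsub>C\<^esub> y) = p \<otimes>\<^bsub>C'\<^esub> q" using hc[OF p(1) q(1)] p q cl[OF p(1) q(1)] inv_into_f_f[OF inj] by metis
    moreover have "?g x = p" "?g y = q" using p q inv_into_f_f[OF inj] by auto
    ultimately show "?g (x \<otimes>\<^bsub>P\<^esub> y) = ?g x \<otimes>\<^bsub>P'\<^esub> ?g y \<and> ?g (x \<otimes>\<^bsub>C\<^esub> y) = ?g x \<otimes>\<^bsub>C'\<^esub> ?g y" by simp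
  qed
  thus ?thesis unfolding brace_iso_def using b2 by blast
qed

locale sbrace = P: comm_group P + C: group C for P :: "'a monoid" and C :: "'a monoid" +
  assumes carr: "carrier C = carrier P"
  and dist: "\<And>a b c. a \<in> carrier P \<Longrightarrow> b \<in> carrier P \<Longrightarrow> c \<in> carrier P \<Longrightarrow>
     a \<otimes>\<^bsub>C\<^esub> (b \<otimes>\<^bsub>P\<^esub> c) = ((a \<otimes>\<^bsub>C\<^esub> b) \<otimes>\<^bsub>P\<^esub> inv\<^bsub>P\<^esub> a) \<otimes>\<^bsub>P\<^esub> (a \<otimes>\<^bsub>C\<^esub> c)"
  and fin: "finite (carrier P)"
begin
abbreviation pa (infixl "\<oplus>" 65) where "a \<oplus> b \<equiv> a \<otimes>\<^bsub>P\<^esub> b"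
abbreviation ca (infixl "\<cdot>" 70) where "a \<cdot> b \<equiv> a \<otimes>\<^bsub>C\<^esub> b"
abbreviation "A \<equiv> carrier P"
abbreviation "z \<equiv> \<one>\<^bsub>P\<^esub>"
abbreviation "ng a \<equiv> inv\<^bsub>P\<^esub> a"
abbreviation "lam \<equiv> brace_lambda P C"

lemma c_closed[simp]: "a \<in> A \<Longrightarrow> b \<in> A \<Longrightarrow> a \<cdot> b \<in> A"
  using C.m_closed carr by auto

lemma r_z: assumes "a \<in> A" shows "a \<cdot> z = a"
proof -
  have "a \<cdot> z = (a \<cdot> z \<oplus> ng a) \<oplus> (a \<cdot> z)" using dist[of a z z] assms by simp
  hence "z \<oplus> (a \<cdot> z) = (a \<cdot> z \<oplus> ng a) \<oplus> (a \<cdot> z)" using assms by simp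
  hence "z = a \<cdot> z \<oplus> ng a" using assms P.right_cancel by (metis P.inv_closed P.m_closed P.one_closed c_closed)
  thus ?thesis using assms by (metis P.inv_closed P.inv_inv P.inv_comm P.inv_equality P.one_closed c_closed)
qed

lemma one_C: "\<one>\<^bsub>C\<^esub> = z"
  using r_z[of "\<one>\<^bsub>C\<^esub>"] C.one_closed carr C.l_one[of z] by auto

lemma lam_def': "lam a b = ng a \<oplus> (a \<cdot> b)" by (simp add: brace_lambda_def)

lemma lam_closed[simp]: "a \<in> A \<Longrightarrow> b \<in> A \<Longrightarrow> lam a b \<in> A"
  by (simp add: lam_def')

lemma circ_eq: "a \<in> A \<Longrightarrow> b \<in> A \<Longrightarrow> a \<cdot> b = a \<oplus> lam a b"
  by (simp add: lam_def' P.m_assoc[symmetric])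

lemma lam_hom: assumes "a \<in> A" "b \<in> A" "c \<in> A" shows "lam a (b \<oplus> c) = lam a b \<oplus> lam a c"
  using assms by (simp add: lam_def' dist P.m_ac)

lemma lam_one[simp]: "b \<in> A \<Longrightarrow> lam z b = b"
proof -
  assume b: "b \<in> A"
  have "z \<cdot> b = b" using C.l_one[of b] carr b one_C by simp
  thus ?thesis using b by (simp add: lam_def')
qed

lemma lam_z[simp]: "a \<in> A \<Longrightarrow> lam a z = z"
  using r_z by (simp add: lam_def')

lemma lam_comp: assumes "a \<in> A" "b \<in> A" "c \<in> A" shows "lam (a \<cdot> b) c = lam a (lam b c)"
proof -
  have "(a \<cdot> b) \<cdot> c = a \<cdot> (b \<oplus> lam b c)" using assms C.m_assoc carr circ_eq by simp
  also have "\<dots> = a \<cdot> b \<oplus> ng a \<oplus> a \<cdot> lam b c" using assms dist by simp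
  finally have e: "(a \<cdot> b) \<cdot> c = a \<cdot> b \<oplus> (ng a \<oplus> a \<cdot> lam b c)" using assms by (simp add: P.m_assoc)
  have "lam (a \<cdot> b) c = (ng (a \<cdot> b) \<oplus> a \<cdot> b) \<oplus> (ng a \<oplus> a \<cdot> lam b c)"
    unfolding lam_def'[of "a \<cdot> b"] e using assms by (simp add: P.m_assoc[symmetric])
  also have "\<dots> = lam a (lam b c)" using assms by (simp add: lam_def'[of a])
  finally show ?thesis .
qed

lemma lam_inj: assumes "a \<in> A" "b \<in> A" "c \<in> A" "lam a b = lam a c" shows "b = c"
proof -
  have "a \<cdot> b = a \<cdot> c" using assms by (simp add: circ_eq)
  thus ?thesis using assms C.Units_l_cancel C.Units_eq carr by auto
qed

lemma lam_inv: assumes "a \<in> A" "b \<in> A" shows "lam a (ng b) = ng (lam a b)"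
proof -
  have "lam a (ng b) \<oplus> lam a b = z" using lam_hom[of a "ng b" b] assms by simp
  thus ?thesis using assms by (metis P.inv_equality P.inv_closed lam_closed)
qed

definition "orb c = (\<lambda>b. lam b c) ` A"
definition "F = {c\<in>A. \<forall>b\<in>A. lam b c = c}"
definition "stab c = {b\<in>A. lam b c = c}"

lemma theta_eq: "a \<in> A \<Longrightarrow> b \<in> A \<Longrightarrow> c \<in> A \<Longrightarrow> brace_theta P C a b c = lam b c"
proof -
  assume h: "a \<in> A" "b \<in> A" "c \<in> A"
  have "brace_theta P C a b c = (lam b c \<oplus> a) \<oplus> ng a"
    unfolding brace_theta_def using h P.m_comm[of a "lam b c"] by simp
  also have "\<dots> = lam b c" using h by (simp add: P.m_assoc)
  finally show ?thesis .
qed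

lemma orbit_eq: assumes "c \<in> A" shows "theta_orbit P C c = orb c"
proof
  show "theta_orbit P C c \<subseteq> orb c"
  proof
    fix y assume "y \<in> theta_orbit P C c"
    then obtain a b where ab: "a \<in> A" "b \<in> A" "y = brace_theta P C a b c" unfolding theta_orbit_def by blast
    hence "y = lam b c" using theta_eq assms by simp
    thus "y \<in> orb c" unfolding orb_def using ab by blast
  qed
  show "orb c \<subseteq> theta_orbit P C c"
  proof
    fix y assume "y \<in> orb c"
    then obtain b where b: "b \<in> A" "y = lam b c" unfolding orb_def by blast
    hence "y = brace_theta P C z b c" using theta_eq assms by simp
    thus "y \<in> theta_orbit P C c" unfolding theta_orbit_def using b P.one_closed by blast
  qed
qed

lemma orb_sub: "c \<in> A \<Longrightarrow> orb c \<subseteq> A" unfolding orb_def by auto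
lemma orb_self: "c \<in> A \<Longrightarrow> c \<in> orb c" unfolding orb_def using P.one_closed lam_one[of c] by (metis image_eqI)
lemma orb_fin: "c \<in> A \<Longrightarrow> finite (orb c)" using orb_sub fin finite_subset by blast

lemma C_inv_closed: "b \<in> A \<Longrightarrow> inv\<^bsub>C\<^esub> b \<in> A" using C.inv_closed carr by auto

lemma orb_trans: assumes "c \<in> A" "d \<in> orb c" shows "orb d = orb c"
proof -
  obtain b0 where b0: "b0 \<in> A" "d = lam b0 c" using assms unfolding orb_def by auto
  show ?thesis
  proof
    show "orb d \<subseteq> orb c" unfolding orb_def using b0 assms lam_comp[symmetric] c_closed by fastforce
    show "orb c \<subseteq> orb d"
    proof
      fix y assume "y \<in> orb c"
      then obtain b where b: "b \<in> A" "y = lam b c" unfolding orb_def by auto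
      let ?e = "b \<cdot> inv\<^bsub>C\<^esub> b0"
      have e: "?e \<in> A" using b b0 C_inv_closed by auto
      have bb: "b \<in> carrier C" "b0 \<in> carrier C" using b b0 carr by auto
      have "?e \<cdot> b0 = b" using C.m_assoc[OF bb(1) C.inv_closed[OF bb(2)] bb(2)] C.l_inv[OF bb(2)] C.r_one[OF bb(1)] by simp
      hence "lam ?e d = y" using b b0 e assms lam_comp[of ?e b0 c] by simp
      thus "y \<in> orb d" unfolding orb_def using e by auto
    qed
  qed
qed

lemma F_sub: "F \<subseteq> A" unfolding F_def by auto
lemma z_F: "z \<in> F" unfolding F_def by auto
lemma F_add: "c \<in> F \<Longrightarrow> d \<in> F \<Longrightarrow> c \<oplus> d \<in> F" unfolding F_def by (auto simp: lam_hom)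
lemma F_ng: "c \<in> F \<Longrightarrow> ng c \<in> F" unfolding F_def by (auto simp: lam_inv)

lemma F_orb: assumes "c \<in> F" shows "orb c = {c}"
  using assms unfolding F_def orb_def by auto

lemma nF_orb: assumes "c \<in> A" "c \<notin> F" shows "card (orb c) > 1"
proof -
  obtain b where b: "b \<in> A" "lam b c \<noteq> c" using assms unfolding F_def by auto
  have "{c, lam b c} \<subseteq> orb c" using orb_self assms b unfolding orb_def by auto
  hence "card {c, lam b c} \<le> card (orb c)" using orb_fin assms card_mono by blast
  thus ?thesis using b by simp
qed

lemma orbit_count: assumes "x \<in> A" shows "card A = card (orb x) * card (stab x)"
proof -
  let ?fib = "\<lambda>y. {b\<in>A. lam b x = y}"
  have U: "A = (\<Union>y\<in>orb x. ?fib y)" unfolding orb_def using assms by auto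
  have fc: "card (?fib y) = card (stab x)" if y: "y \<in> orb x" for y
  proof -
    obtain b0 where b0: "b0 \<in> A" "y = lam b0 x" using y unfolding orb_def by auto
    have "?fib y = (\<lambda>b. b0 \<cdot> b) ` stab x"
    proof
      show "(\<lambda>b. b0 \<cdot> b) ` stab x \<subseteq> ?fib y" unfolding stab_def using b0 assms lam_comp by auto
      show "?fib y \<subseteq> (\<lambda>b. b0 \<cdot> b) ` stab x"
      proof
        fix b assume bf: "b \<in> ?fib y"
        let ?e = "inv\<^bsub>C\<^esub> b0 \<cdot> b"
        have e: "?e \<in> A" using bf b0 C_inv_closed by auto
        have bb: "b \<in> carrier C" "b0 \<in> carrier C" using bf b0 carr by auto
        have eb: "b0 \<cdot> ?e = b" using C.m_assoc[OF bb(2) C.inv_closed[OF bb(2)] bb(1)] C.r_inv[OF bb(2)] C.l_one[OF bb(1)] by simp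
        have "inv\<^bsub>C\<^esub> b0 \<cdot> b0 = z" using b0 carr one_C by simp
        hence "lam ?e x = x" using bf b0 assms lam_comp[of "inv\<^bsub>C\<^esub> b0" b x] lam_comp[of "inv\<^bsub>C\<^esub> b0" b0 x] C_inv_closed[of b0]
          by simp
        thus "b \<in> (\<lambda>b. b0 \<cdot> b) ` stab x" unfolding stab_def using e eb by force
      qed
    qed
    moreover have "inj_on (\<lambda>b. b0 \<cdot> b) (stab x)" unfolding inj_on_def stab_def
      using b0 carr C.Units_l_cancel C.Units_eq by auto
    ultimately show ?thesis by (simp add: card_image)
  qed
  have "card A = (\<Sum>y\<in>orb x. card (?fib y))"
    apply (subst U) apply (rule card_UN_disjoint) using orb_fin assms fin by auto
  also have "\<dots> = (\<Sum>y\<in>orb x. card (stab x))" using fc by simp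
  finally show ?thesis by simp
qed

lemma coset_sub: assumes "x \<in> A - F" shows "(\<lambda>c. x \<oplus> c) ` F \<subseteq> A - F"
proof
  fix y assume "y \<in> (\<lambda>c. x \<oplus> c) ` F"
  then obtain c where c: "c \<in> F" "y = x \<oplus> c" by auto
  have cA: "c \<in> A" using c F_sub by auto
  have "y \<notin> F"
  proof
    assume "y \<in> F"
    hence "y \<oplus> ng c \<in> F" using F_add F_ng c by auto
    moreover have "y \<oplus> ng c = x" using c cA assms by (simp add: P.m_assoc)
    ultimately show False using assms by auto
  qed
  thus "y \<in> A - F" using c cA assms by auto
qed

lemma coset_card: assumes "x \<in> A" shows "card ((\<lambda>c. x \<oplus> c) ` F) = card F"
  apply (rule card_image) unfolding inj_on_def using assms F_sub
  by (metis P.Units_eq P.Units_l_cancel subsetD)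
end

locale sb1 = sbrace +
  assumes vert: "card (theta_vertices P C) = 1"
begin

lemma L_props: "A - F \<noteq> {}" "card (A - F) > 1" "\<And>c. c \<in> A - F \<Longrightarrow> orb c = A - F"
proof -
  obtain V where V: "theta_vertices P C = {V}" using vert card_1_singletonE by blast
  hence "V \<in> theta_vertices P C" by auto
  then obtain x0 where x0: "x0 \<in> A" "V = theta_orbit P C x0" "card V > 1"
    unfolding theta_vertices_def by auto
  hence Vx: "V = orb x0" using orbit_eq by simp
  have ov: "orb c = V" if c: "c \<in> A - F" for c
  proof -
    have "orb c \<in> theta_vertices P C" unfolding theta_vertices_def
      using c nF_orb orbit_eq by (metis DiffD1 DiffD2 image_eqI mem_Collect_eq)
    thus ?thesis using V by auto
  qed
  have x0F: "x0 \<notin> F" using F_orb x0 Vx by fastforce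
  have VL: "V = A - F"
  proof
    show "V \<subseteq> A - F"
    proof
      fix y assume y: "y \<in> V"
      hence yA: "y \<in> A" using Vx orb_sub x0 by auto
      have "orb y = V" using orb_trans[of x0 y] y Vx x0 by auto
      hence "y \<notin> F" using F_orb x0 by fastforce
      thus "y \<in> A - F" using yA by auto
    qed
    show "A - F \<subseteq> V" using ov orb_self by blast
  qed
  show "A - F \<noteq> {}" using x0 x0F by auto
  show "card (A - F) > 1" using VL x0 by auto
  show "\<And>c. c \<in> A - F \<Longrightarrow> orb c = A - F" using ov VL by auto
qed

lemma arith_aux: fixes s l f :: nat assumes h: "f + l = l * s" "f \<le> l" "f \<ge> 1" shows "f = l"
proof -
  consider "s = 0" | "s = 1" | "s = 2" | "s \<ge> 3" by arith
  thus "f = l"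
  proof cases
    case 4 hence "l * s \<ge> l * 3" by simp
    thus ?thesis using h by linarith
  qed (use h in auto)
qed

lemma card_FL: "card F = card (A - F)"
proof -
  obtain x where x: "x \<in> A - F" using L_props by auto
  have n1: "card A = card (A - F) * card (stab x)" using orbit_count[of x] x L_props by auto
  have FA: "F \<subseteq> A" using F_sub .
  have n2: "card A = card F + card (A - F)" using card_Diff_subset[OF finite_subset[OF FA fin] FA] card_mono[OF fin FA] by simp
  have f1: "card F \<ge> 1" using z_F finite_subset[OF FA fin] card_0_eq by fastforce
  have fl: "finite (A - F)" using fin by simp
  have "card F \<le> card (A - F)" using card_mono[OF fl coset_sub[OF x]] coset_card[of x] x by simp
  thus ?thesis using n1 n2 f1 arith_aux by simp
qed

lemma L_coset: assumes "x \<in> A - F" shows "A - F = (\<lambda>c. x \<oplus> c) ` F"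
  using coset_sub[OF assms] coset_card[of x] assms card_FL fin
  by (metis DiffD1 card_subset_eq finite_Diff)

definition "x0 = (SOME x. x \<in> A - F)"
lemma x0L: "x0 \<in> A - F" unfolding x0_def using L_props some_in_eq by blast

definition "fm a = ng x0 \<oplus> lam a x0"

lemma x0A: "x0 \<in> A" using x0L by auto

lemma lam_F: "c \<in> F \<Longrightarrow> a \<in> A \<Longrightarrow> lam a c = c" unfolding F_def by auto

lemma fm_F: assumes a: "a \<in> A" shows "fm a \<in> F" "lam a x0 = x0 \<oplus> fm a"
proof -
  have "lam a x0 \<in> orb x0" unfolding orb_def using a by auto
  hence "lam a x0 \<in> (\<lambda>c. x0 \<oplus> c) ` F" using L_props(3)[OF x0L] L_coset[OF x0L] by auto
  then obtain c where c: "c \<in> F" "lam a x0 = x0 \<oplus> c" by auto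
  have cA: "c \<in> A" using c F_sub by auto
  have "fm a = c" unfolding fm_def c(2) using x0A cA by (simp add: P.m_assoc[symmetric])
  thus "fm a \<in> F" "lam a x0 = x0 \<oplus> fm a" using c by auto
qed

lemma fmA[simp]: "a \<in> A \<Longrightarrow> fm a \<in> A" using fm_F F_sub by auto

lemma lam_L: assumes a: "a \<in> A" and y: "y \<in> A - F" shows "lam a y = y \<oplus> fm a"
proof -
  obtain d where d: "d \<in> F" "y = x0 \<oplus> d" using L_coset[OF x0L] y by auto
  have dA: "d \<in> A" using d F_sub by auto
  have "lam a y = lam a x0 \<oplus> d" using d dA x0A a lam_hom lam_F by simp
  also have "\<dots> = y \<oplus> fm a" using fm_F[OF a] d dA x0A a by (simp add: P.m_ac)
  finally show ?thesis .
qed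

lemma lam_gen: "a \<in> A \<Longrightarrow> b \<in> A \<Longrightarrow> lam a b = (if b \<in> F then b else b \<oplus> fm a)"
  using lam_F lam_L by auto

lemma circ_gen: "a \<in> A \<Longrightarrow> b \<in> A \<Longrightarrow> a \<cdot> b = a \<oplus> (if b \<in> F then b else b \<oplus> fm a)"
  using circ_eq lam_gen by simp

lemma fm_surj: assumes "c \<in> F" shows "\<exists>a\<in>A. fm a = c"
proof -
  have cA: "c \<in> A" using assms F_sub by auto
  have "x0 \<oplus> c \<in> A - F" using L_coset[OF x0L] assms by auto
  hence "x0 \<oplus> c \<in> orb x0" using L_props(3)[OF x0L] by auto
  then obtain a where a: "a \<in> A" "lam a x0 = x0 \<oplus> c" unfolding orb_def by auto
  hence "x0 \<oplus> fm a = x0 \<oplus> c" using fm_F by simp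
  hence "fm a = c" using a cA x0A P.Units_l_cancel P.Units_eq by auto
  thus ?thesis using a by auto
qed

lemma sq_F: assumes y: "y \<in> A - F" shows "y \<oplus> y \<in> F"
proof (rule ccontr)
  assume "y \<oplus> y \<notin> F"
  hence "y \<oplus> y \<in> (\<lambda>c. y \<oplus> c) ` F" using L_coset[OF y] y by (metis DiffD1 DiffI P.m_closed)
  then obtain c where "c \<in> F" "y \<oplus> y = y \<oplus> c" by auto
  hence "y = c" using y F_sub P.Units_l_cancel P.Units_eq by auto
  thus False using y \<open>c \<in> F\<close> by auto
qed

lemma F_sq: assumes c: "c \<in> F" shows "c \<oplus> c = z"
proof -
  obtain a where a: "a \<in> A" "fm a = c" using fm_surj c by auto
  have cA: "c \<in> A" using c F_sub by auto
  have "x0 \<oplus> x0 = lam a (x0 \<oplus> x0)" using lam_F[OF sq_F[OF x0L] a(1)] by simp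
  also have "\<dots> = (x0 \<oplus> c) \<oplus> (x0 \<oplus> c)" using lam_hom a x0A fm_F by simp
  also have "\<dots> = (x0 \<oplus> x0) \<oplus> (c \<oplus> c)" using x0A cA by (simp add: P.m_ac)
  finally show ?thesis using x0A cA by simp
qed

lemma F_inv: "c \<in> F \<Longrightarrow> ng c = c"
  using F_sq F_sub by (metis P.inv_equality subsetD)

lemma fm_hom: assumes "a \<in> A" "b \<in> A" shows "fm (a \<cdot> b) = fm a \<oplus> fm b"
proof -
  have "lam (a \<cdot> b) x0 = lam a (x0 \<oplus> fm b)" using lam_comp[OF assms x0A] fm_F(2)[OF assms(2)] by simp
  also have "\<dots> = x0 \<oplus> fm a \<oplus> fm b" using lam_hom assms x0A fm_F lam_F by simp
  finally have "x0 \<oplus> fm (a \<cdot> b) = x0 \<oplus> (fm a \<oplus> fm b)" using fm_F(2)[of "a \<cdot> b"] assms x0A by (simp add: P.m_assoc)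
  thus ?thesis using assms x0A P.Units_l_cancel P.Units_eq by simp
qed

lemma fm_z: "fm z = z" unfolding fm_def using x0A by simp

lemma fm_addF: assumes "a \<in> A" "c \<in> F" shows "fm (a \<oplus> c) = fm a \<oplus> fm c"
proof -
  have "a \<cdot> c = a \<oplus> c" using circ_gen assms F_sub by auto
  thus ?thesis using fm_hom assms F_sub by (metis subsetD)
qed

lemma fm_fm: assumes c: "c \<in> F" shows "fm (fm c) = z"
proof -
  have cA: "c \<in> A" using c F_sub by auto
  have fc: "fm c \<in> F" "fm c \<in> A" using fm_F cA by auto
  have x0F: "x0 \<notin> F" using x0L by auto
  have "c \<cdot> x0 = x0 \<oplus> (c \<oplus> fm c)" using circ_gen[OF cA x0A] x0F cA x0A fc by (simp add: P.m_ac)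
  hence "fm x0 \<oplus> fm c = fm x0 \<oplus> (fm c \<oplus> fm (fm c))"
    using fm_hom[OF cA x0A] fm_addF[OF x0A F_add[OF c fc(1)]] fm_addF[OF cA fc(1)] P.m_comm cA x0A
    by (metis fmA)
  hence "fm c = fm c \<oplus> fm (fm c)" using fc x0A P.Units_l_cancel P.Units_eq by (simp add: fmA)
  thus ?thesis using fc by (simp add: fmA)
qed

lemma fm_sq: assumes y: "y \<in> A - F" shows "fm (y \<oplus> y) = fm (fm y)"
proof -
  have yA: "y \<in> A" using y by auto
  have fy: "fm y \<in> F" "fm y \<in> A" using fm_F yA by auto
  have "y \<cdot> y = (y \<oplus> y) \<oplus> fm y" using circ_gen[OF yA yA] y yA fy by (simp add: P.m_assoc)
  hence "fm y \<oplus> fm y = fm (y \<oplus> y) \<oplus> fm (fm y)" using fm_hom[OF yA yA] fm_addF[OF _ fy(1), of "y \<oplus> y"] yA by simp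
  hence "z = fm (y \<oplus> y) \<oplus> fm (fm y)" using F_sq[OF fy(1)] by simp
  hence "ng (fm (fm y)) = fm (y \<oplus> y)" using yA fy by (metis P.inv_equality P.m_closed fmA)
  thus ?thesis using F_inv fm_F fy by metis
qed


definition "I = fm ` F"
definition "K = {c\<in>F. fm c = z}"
definition "v = fm x0"

lemma FA: "c \<in> F \<Longrightarrow> c \<in> A" using F_sub by auto
lemma finF: "finite F" using F_sub fin finite_subset by auto
lemma vF: "v \<in> F" unfolding v_def using fm_F x0A by auto
lemma I_F: "I \<subseteq> F" unfolding I_def using fm_F FA by auto
lemma I_K: "I \<subseteq> K" unfolding I_def K_def using fm_F FA fm_fm by auto
lemma K_F: "K \<subseteq> F" unfolding K_def by auto
lemma z_I: "z \<in> I" unfolding I_def using z_F fm_z by force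
lemma finI: "finite I" using finF I_F finite_subset by auto
lemma finK: "finite K" using finF K_F finite_subset by auto

lemma fm_L: assumes "y \<in> A - F" shows "\<exists>d\<in>F. y = x0 \<oplus> d \<and> fm y = v \<oplus> fm d"
proof -
  obtain d where d: "d \<in> F" "y = x0 \<oplus> d" using L_coset[OF x0L] assms by auto
  thus ?thesis using fm_addF[OF x0A d(1)] v_def by auto
qed

lemma F_split: "F = I \<union> (\<lambda>i. v \<oplus> i) ` I"
proof
  show "F \<subseteq> I \<union> (\<lambda>i. v \<oplus> i) ` I"
  proof
    fix c assume c: "c \<in> F"
    obtain a where a: "a \<in> A" "fm a = c" using fm_surj c by auto
    show "c \<in> I \<union> (\<lambda>i. v \<oplus> i) ` I"
    proof (cases "a \<in> F")
      case True thus ?thesis using a unfolding I_def by auto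
    next
      case False
      then obtain d where "d \<in> F" "fm a = v \<oplus> fm d" using fm_L a by auto
      thus ?thesis using a unfolding I_def by auto
    qed
  qed
  show "I \<union> (\<lambda>i. v \<oplus> i) ` I \<subseteq> F" using I_F F_add vF by auto
qed

lemma cardF_le: "card F \<le> 2 * card I"
proof -
  have "card F \<le> card I + card ((\<lambda>i. v \<oplus> i) ` I)" using F_split card_Un_le by metis
  also have "\<dots> \<le> card I + card I" using card_image_le finI by auto
  finally show ?thesis by simp
qed

lemma IK_le: "card I * card K \<le> card F"
proof -
  define s where "s i = (SOME c. c \<in> F \<and> fm c = i)" for i
  have s: "s i \<in> F \<and> fm (s i) = i" if ii: "i \<in> I" for i
  proof -
    obtain c where "c \<in> F" "fm c = i" using ii unfolding I_def by auto
    thus ?thesis unfolding s_def using someI[of "\<lambda>c. c \<in> F \<and> fm c = i" c] by simp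
  qed
  let ?h = "\<lambda>(i,k). s i \<oplus> k"
  have fh: "fm (?h (i,k)) = i" if "i \<in> I" "k \<in> K" for i k
  proof -
    have iA: "i \<in> A" using that(1) I_F FA by auto
    have "s i \<in> A" "k \<in> F" "fm k = z" using s[OF that(1)] that(2) FA unfolding K_def by auto
    thus ?thesis using fm_addF[of "s i" k] s[OF that(1)] iA by simp
  qed
  have "inj_on ?h (I \<times> K)"
  proof (rule inj_onI)
    fix p q assume p: "p \<in> I \<times> K" and q: "q \<in> I \<times> K" and e: "?h p = ?h q"
    obtain i k where pk: "p = (i,k)" using prod.exhaust by blast
    obtain i' k' where qk: "q = (i',k')" using prod.exhaust by blast
    have ii: "i = i'" using fh[of i k] fh[of i' k'] p q e pk qk by auto
    have "s i \<oplus> k = s i \<oplus> k'" using e pk qk ii by simp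
    moreover have "k \<in> A" "k' \<in> A" "s i \<in> A" using s[of i] p q pk qk FA K_F by auto
    ultimately have "k = k'" using P.Units_l_cancel P.Units_eq by simp
    thus "p = q" using pk qk ii by simp
  qed
  moreover have "?h ` (I \<times> K) \<subseteq> F" using s F_add K_F by auto
  ultimately have "card (I \<times> K) \<le> card F" using card_inj_on_le finF by blast
  thus ?thesis by (simp add: card_cartesian_product)
qed

lemma card_I_le2: "card I \<le> 2"
proof -
  have "card I \<le> card K" using I_K finK card_mono by auto
  hence "card I * card I \<le> card I * card K" by simp
  hence "card I * card I \<le> 2 * card I" using IK_le cardF_le by linarith
  moreover have "card I > 0" using z_I finI card_gt_0_iff by auto
  ultimately show ?thesis using mult_le_cancel2 by metis
qed

lemma cardF_ge2: "card F \<ge> 2" using card_FL L_props by simp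

lemma cardA: "card A = 2 * card F"
proof -
  have "card A = card F + card (A - F)" using card_Diff_subset[OF finF F_sub] card_mono[OF fin F_sub] by simp
  thus ?thesis using card_FL by simp
qed

lemma A_split: assumes "y \<in> A - F" shows "A = F \<union> (\<lambda>c. y \<oplus> c) ` F"
  using L_coset[OF assms] F_sub by auto

end
context sb1 begin
lemma z4_case:
  assumes y: "y \<in> A - F" and yy: "y \<oplus> y = v" and FF: "F = {z, v}" and vz: "v \<noteq> z"
  and fF: "\<And>c. c \<in> F \<Longrightarrow> fm c = z" and fL: "\<And>c. c \<in> A - F \<Longrightarrow> fm c = v"
  shows "brace_iso P C Z4_add Z4_circ"
proof -
  define \<psi> where "\<psi> k = (if k = 0 then z else if k = 1 then y else if k = (2::int) then v else y \<oplus> v)" for k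
  have yA: "y \<in> A" using y by auto
  have vA: "v \<in> A" using vF FA by auto
  have vv: "v \<oplus> v = z" using F_sq vF by auto
  have yv: "y \<oplus> v \<in> A - F" using L_coset[OF y] vF by auto
  have yy2: "y \<oplus> (y \<oplus> t) = v \<oplus> t" if "t \<in> A" for t using yy that yA by (simp add: P.m_assoc[symmetric])
  have vv2: "v \<oplus> (v \<oplus> t) = t" if "t \<in> A" for t using vv that vA by (simp add: P.m_assoc[symmetric])
  have four: "k \<in> {0..3} \<Longrightarrow> k = 0 \<or> k = 1 \<or> k = 2 \<or> k = (3::int)" for k by auto
  have hp: "\<psi> ((k + l) mod 4) = \<psi> k \<oplus> \<psi> l" if "k \<in> {0..3}" "l \<in> {0..3}" for k l
    using four[OF that(1)] four[OF that(2)]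
    by (elim disjE) (simp_all add: \<psi>_def yA vA yy yy2 vv vv2 P.m_ac)
  have memF: "z \<in> F" "v \<in> F" "y \<notin> F" "y \<oplus> v \<notin> F" using FF y yv by auto
  have fms: "fm z = z" "fm v = z" "fm y = v" "fm (y \<oplus> v) = v" using fF fL memF y yv by auto
  have hc: "\<psi> ((k + l + 2*k*l) mod 4) = \<psi> k \<cdot> \<psi> l" if "k \<in> {0..3}" "l \<in> {0..3}" for k l
    using four[OF that(1)] four[OF that(2)]
    by (elim disjE) (simp_all add: \<psi>_def circ_gen yA vA memF fms yy yy2 vv vv2 P.m_ac)
  have psiA: "\<psi> k \<in> A" for k unfolding \<psi>_def using yA vA by simp
  have im: "\<psi> ` {0..3} = A"
  proof
    show "\<psi> ` {0..3} \<subseteq> A" using psiA by blast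
    show "A \<subseteq> \<psi> ` {0..3}"
    proof
      fix a assume a: "a \<in> A"
      have p: "\<psi> 0 = z" "\<psi> 1 = y" "\<psi> 2 = v" "\<psi> 3 = y \<oplus> v" unfolding \<psi>_def by simp_all
      have "a = z \<or> a = v \<or> a = y \<or> a = y \<oplus> v"
      proof (cases "a \<in> F")
        case True hence "a \<in> {z, v}" using FF by blast
        thus ?thesis by blast
      next
        case False
        then obtain c where "c \<in> F" "a = y \<oplus> c" using A_split[OF y] a by auto
        moreover have "c = z \<or> c = v" using \<open>c \<in> F\<close> FF by blast
        ultimately show ?thesis using yA by (elim disjE) simp_all
      qed
      hence "a \<in> {\<psi> 0, \<psi> 1, \<psi> 2, \<psi> 3}" using p by auto
      moreover have "{\<psi> 0, \<psi> 1, \<psi> 2, \<psi> 3} \<subseteq> \<psi> ` {0..3}" by auto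
      ultimately show "a \<in> \<psi> ` {0..3}" by blast
    qed
  qed
  have cS: "card {0..3::int} = 4" by simp
  have "card {z, v} = 2" using vz by simp
  hence "card F = 2" unfolding FF .
  hence "card A = 4" using cardA by simp
  hence "inj_on \<psi> {0..3}" using im cS eq_card_imp_inj_on[of "{0..3::int}" \<psi>] by simp
  hence bij: "bij_betw \<psi> {0..3} A" using im bij_betw_def by blast
  show ?thesis
  proof (rule iso_from[OF bij])
    show "carrier Z4_add = {0..3}" by (simp add: Z4_add_def)
    fix p q :: int assume p: "p \<in> {0..3}" and q: "q \<in> {0..3}"
    show "p \<otimes>\<^bsub>Z4_add\<^esub> q \<in> {0..3} \<and> p \<otimes>\<^bsub>Z4_circ\<^esub> q \<in> {0..3}"
    proof -
      have "(p+q) mod 4 < 4" "(p+q+2*p*q) mod 4 < 4" by (rule pos_mod_bound, simp)+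
      hence "(p+q) mod 4 \<le> 3" "(p+q+2*p*q) mod 4 \<le> 3" by linarith+
      thus ?thesis by (simp add: Z4_add_def Z4_circ_def)
    qed
    show "\<psi> (p \<otimes>\<^bsub>Z4_add\<^esub> q) = \<psi> p \<oplus> \<psi> q"
      unfolding Z4_add_def using hp[OF p q] by simp
    show "\<psi> (p \<otimes>\<^bsub>Z4_circ\<^esub> q) = \<psi> p \<cdot> \<psi> q"
      unfolding Z4_circ_def using hc[OF p q] by simp
  qed
qed

lemma z2z2_case:
  assumes y: "y \<in> A - F" and yy: "y \<oplus> y = z" and FF: "F = {z, v}" and vz: "v \<noteq> z"
  and fF: "\<And>c. c \<in> F \<Longrightarrow> fm c = z" and fL: "\<And>c. c \<in> A - F \<Longrightarrow> fm c = v"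
  shows "brace_iso P C Z2Z2_add Z2Z2_circ"
proof -
  define \<psi> where "\<psi> p = (if fst p = (0::int) then (if snd p = (0::int) then z else y) else (if snd p = 0 then v else y \<oplus> v))" for p
  define S where "S = {0..1::int} \<times> {0..1::int}"
  have yA: "y \<in> A" using y by auto
  have vA: "v \<in> A" using vF FA by auto
  have vv: "v \<oplus> v = z" using F_sq vF by auto
  have yv: "y \<oplus> v \<in> A - F" using L_coset[OF y] vF by auto
  have yy2: "y \<oplus> (y \<oplus> t) = t" if "t \<in> A" for t using yy that yA by (simp add: P.m_assoc[symmetric])
  have vv2: "v \<oplus> (v \<oplus> t) = t" if "t \<in> A" for t using vv that vA by (simp add: P.m_assoc[symmetric])
  have two: "\<And>x::int. 0 \<le> x \<Longrightarrow> x \<le> 1 \<Longrightarrow> x = 0 \<or> x = 1" by presburger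
  have four: "p = (0,0) \<or> p = (0,1) \<or> p = (1,0) \<or> p = (1,1)" if pS: "p \<in> S" for p
  proof -
    obtain a b where ab: "p = (a,b)" by (cases p)
    have h: "0 \<le> a" "a \<le> 1" "0 \<le> b" "b \<le> 1" using pS ab unfolding S_def by auto
    have "a = 0 \<or> a = 1" "b = 0 \<or> b = 1" using h by presburger+
    thus ?thesis using ab by auto
  qed
  have hp: "\<psi> (p \<otimes>\<^bsub>Z2Z2_add\<^esub> q) = \<psi> p \<oplus> \<psi> q" if "p \<in> S" "q \<in> S" for p q
    using four[OF that(1)] four[OF that(2)]
    by (elim disjE) (simp_all add: Z2Z2_add_def \<psi>_def yA vA yy yy2 vv vv2 P.m_ac)
  have memF: "z \<in> F" "v \<in> F" "y \<notin> F" "y \<oplus> v \<notin> F" using FF y yv by auto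
  have fms: "fm z = z" "fm v = z" "fm y = v" "fm (y \<oplus> v) = v" using fF fL memF y yv by auto
  have hc: "\<psi> (p \<otimes>\<^bsub>Z2Z2_circ\<^esub> q) = \<psi> p \<cdot> \<psi> q" if "p \<in> S" "q \<in> S" for p q
    using four[OF that(1)] four[OF that(2)]
    by (elim disjE) (simp_all add: Z2Z2_circ_def \<psi>_def circ_gen yA vA memF fms yy yy2 vv vv2 P.m_ac)
  have psiA: "\<psi> k \<in> A" for k unfolding \<psi>_def using yA vA by simp
  have im: "\<psi> ` S = A"
  proof
    show "\<psi> ` S \<subseteq> A" using psiA by blast
    show "A \<subseteq> \<psi> ` S"
    proof
      fix a assume a: "a \<in> A"
      have p: "\<psi> (0,0) = z" "\<psi> (0,1) = y" "\<psi> (1,0) = v" "\<psi> (1,1) = y \<oplus> v" unfolding \<psi>_def by simp_all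
      have "a = z \<or> a = v \<or> a = y \<or> a = y \<oplus> v"
      proof (cases "a \<in> F")
        case True hence "a \<in> {z, v}" using FF by blast
        thus ?thesis by blast
      next
        case False
        then obtain c where "c \<in> F" "a = y \<oplus> c" using A_split[OF y] a by auto
        moreover have "c = z \<or> c = v" using \<open>c \<in> F\<close> FF by blast
        ultimately show ?thesis using yA by (elim disjE) simp_all
      qed
      hence "a \<in> {\<psi> (0,0), \<psi> (0,1), \<psi> (1,0), \<psi> (1,1)}" using p by auto
      moreover have "{\<psi> (0,0), \<psi> (0,1), \<psi> (1,0), \<psi> (1,1)} \<subseteq> \<psi> ` S" unfolding S_def by auto
      ultimately show "a \<in> \<psi> ` S" by blast
    qed
  qed
  have cS: "card S = 4" unfolding S_def by simp
  have "card {z, v} = 2" using vz by simp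
  hence "card F = 2" unfolding FF .
  hence "card A = 4" using cardA by simp
  hence "inj_on \<psi> S" using im cS eq_card_imp_inj_on[of S \<psi>] unfolding S_def by simp
  hence bij: "bij_betw \<psi> S A" using im bij_betw_def by blast
  show ?thesis
  proof (rule iso_from[OF bij])
    show "carrier Z2Z2_add = S" by (simp add: Z2Z2_add_def S_def)
    fix p q assume p: "p \<in> S" and q: "q \<in> S"
    show "p \<otimes>\<^bsub>Z2Z2_add\<^esub> q \<in> S \<and> p \<otimes>\<^bsub>Z2Z2_circ\<^esub> q \<in> S"
      using four[OF p] four[OF q] by (elim disjE) (simp_all add: Z2Z2_add_def Z2Z2_circ_def S_def)
    show "\<psi> (p \<otimes>\<^bsub>Z2Z2_add\<^esub> q) = \<psi> p \<oplus> \<psi> q" using hp[OF p q] .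
    show "\<psi> (p \<otimes>\<^bsub>Z2Z2_circ\<^esub> q) = \<psi> p \<cdot> \<psi> q" using hc[OF p q] .
  qed
qed

lemma z2z4_case:
  assumes y: "y \<in> A - F" and uF: "u \<in> F" and wF: "w \<in> F" and yy: "y \<oplus> y = w"
  and FF: "F = {z, u, w, w \<oplus> u}" and c4: "card F = 4"
  and fu: "fm u = z" and fw: "fm w = u" and fy: "fm y = w"
  shows "brace_iso P C Z2Z4_add Z2Z4_circ"
proof -
  define \<psi> where "\<psi> p = (if snd p = (0::int) then (if fst p = (0::int) then z else u)
     else if snd p = 1 then (if fst p = 0 then y else y \<oplus> u)
     else if snd p = 2 then (if fst p = 0 then w else w \<oplus> u)
     else (if fst p = 0 then y \<oplus> w else (y \<oplus> w) \<oplus> u))" for p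
  define S where "S = {0..1::int} \<times> {0..3::int}"
  have yA: "y \<in> A" using y by auto
  have uA: "u \<in> A" using uF FA by auto
  have wA: "w \<in> A" using wF FA by auto
  have uu: "u \<oplus> u = z" using F_sq uF by auto
  have ww: "w \<oplus> w = z" using F_sq wF by auto
  have yy2: "y \<oplus> (y \<oplus> t) = w \<oplus> t" if "t \<in> A" for t using yy that yA by (simp add: P.m_assoc[symmetric])
  have uu2: "u \<oplus> (u \<oplus> t) = t" if "t \<in> A" for t using uu that uA by (simp add: P.m_assoc[symmetric])
  have ww2: "w \<oplus> (w \<oplus> t) = t" if "t \<in> A" for t using ww that wA by (simp add: P.m_assoc[symmetric])
  have eight: "p \<in> {(0,0),(1,0),(0,1),(1,1),(0,2),(1,2),(0,3),(1,3)}" if pS: "p \<in> S" for p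
  proof -
    obtain a b where ab: "p = (a,b)" by (cases p)
    have h: "0 \<le> a" "a \<le> 1" "0 \<le> b" "b \<le> 3" using pS ab unfolding S_def by auto
    have "a = 0 \<or> a = 1" "b = 0 \<or> b = 1 \<or> b = 2 \<or> b = 3" using h by presburger+
    thus ?thesis using ab by auto
  qed
  have hp: "\<psi> (p \<otimes>\<^bsub>Z2Z4_add\<^esub> q) = \<psi> p \<oplus> \<psi> q" if "p \<in> S" "q \<in> S" for p q
    using eight[OF that(1)] eight[OF that(2)]
    by (simp only: insert_iff empty_iff) (elim disjE; simp add: Z2Z4_add_def \<psi>_def yA uA wA yy yy2 uu uu2 ww ww2 P.m_ac)
  have uwF: "w \<oplus> u \<in> F" using F_add wF uF by auto
  have Lm: "y \<oplus> c \<in> A - F" if "c \<in> F" for c using L_coset[OF y] that by auto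
  have memF: "z \<in> F" "u \<in> F" "w \<in> F" "w \<oplus> u \<in> F" "y \<notin> F" "y \<oplus> u \<notin> F" "y \<oplus> w \<notin> F" "(y \<oplus> w) \<oplus> u \<notin> F"
    using z_F uF wF uwF Lm[of z] Lm[OF uF] Lm[OF wF] Lm[OF uwF] yA uA wA by (auto simp: P.m_assoc)
  have fmL: "fm (y \<oplus> c) = w \<oplus> fm c" if "c \<in> F" for c using fm_addF[OF yA that] fy by simp
  have fms: "fm z = z" "fm u = z" "fm w = u" "fm (w \<oplus> u) = u" "fm y = w" "fm (y \<oplus> u) = w"
     "fm (y \<oplus> w) = w \<oplus> u" "fm ((y \<oplus> w) \<oplus> u) = w \<oplus> u"
    using fm_z fu fw fy fm_addF[OF wA uF] fmL[OF uF] fmL[OF wF] fm_addF[of "y \<oplus> w" u] uF yA wA uA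
    by (auto simp: fm_addF)
  define e where "e p = (eps4 (snd p), (2 * snd p) mod 4)" for p :: "int \<times> int"
  have eS: "e p \<in> S" if "p \<in> S" for p using eight[OF that] unfolding e_def S_def eps4_def by auto
  have memS: "\<psi> p \<in> F \<longleftrightarrow> snd p \<in> {0,2}" if "p \<in> S" for p
    using eight[OF that] memF unfolding \<psi>_def by auto
  have fmS: "fm (\<psi> p) = \<psi> (e p)" if "p \<in> S" for p
    using eight[OF that] fms unfolding \<psi>_def e_def eps4_def by auto
  have cl: "p \<otimes>\<^bsub>Z2Z4_add\<^esub> q \<in> S" if "p \<in> S" "q \<in> S" for p q
    using eight[OF that(1)] eight[OF that(2)] unfolding S_def Z2Z4_add_def by auto
  have arith: "p \<otimes>\<^bsub>Z2Z4_circ\<^esub> q = (if snd q \<in> {0,2} then p \<otimes>\<^bsub>Z2Z4_add\<^esub> q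
       else p \<otimes>\<^bsub>Z2Z4_add\<^esub> (q \<otimes>\<^bsub>Z2Z4_add\<^esub> e p))" if "p \<in> S" "q \<in> S" for p q
    using eight[OF that(1)] eight[OF that(2)]
    by (simp only: insert_iff empty_iff) (elim disjE; simp add: Z2Z4_add_def Z2Z4_circ_def e_def eps4_def)
  have psiA: "\<psi> k \<in> A" for k unfolding \<psi>_def using yA uA wA by simp
  have hc: "\<psi> (p \<otimes>\<^bsub>Z2Z4_circ\<^esub> q) = \<psi> p \<cdot> \<psi> q" if p: "p \<in> S" and q: "q \<in> S" for p q
  proof (cases "snd q \<in> {0,2}")
    case True
    have "\<psi> p \<cdot> \<psi> q = \<psi> p \<oplus> \<psi> q" using circ_gen[OF psiA psiA] memS[OF q] True by simp
    thus ?thesis using arith[OF p q] True hp[OF p q] by simp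
  next
    case False
    have "\<psi> p \<cdot> \<psi> q = \<psi> p \<oplus> (\<psi> q \<oplus> \<psi> (e p))" using circ_gen[OF psiA psiA] memS[OF q] False fmS[OF p] by simp
    also have "\<dots> = \<psi> (p \<otimes>\<^bsub>Z2Z4_add\<^esub> (q \<otimes>\<^bsub>Z2Z4_add\<^esub> e p))"
      using hp[OF q eS[OF p]] hp[OF p cl[OF q eS[OF p]]] by simp
    finally show ?thesis using arith[OF p q] False by simp
  qed
  have im: "\<psi> ` S = A"
  proof
    show "\<psi> ` S \<subseteq> A" using psiA by blast
    show "A \<subseteq> \<psi> ` S"
    proof
      fix a assume a: "a \<in> A"
      have "a \<in> {z, u, w, w \<oplus> u, y, y \<oplus> u, y \<oplus> w, y \<oplus> (w \<oplus> u)}"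
      proof (cases "a \<in> F")
        case True thus ?thesis using FF by blast
      next
        case False
        then obtain c where c: "c \<in> F" "a = y \<oplus> c" using A_split[OF y] a by auto
        hence "c \<in> {z, u, w, w \<oplus> u}" using FF by blast
        thus ?thesis using c yA by auto
      qed
      moreover have "y \<oplus> (w \<oplus> u) = (y \<oplus> w) \<oplus> u" using yA wA uA by (simp add: P.m_assoc)
      ultimately have "a \<in> {\<psi> (0,0), \<psi> (1,0), \<psi> (0,2), \<psi> (1,2), \<psi> (0,1), \<psi> (1,1), \<psi> (0,3), \<psi> (1,3)}"
        unfolding \<psi>_def by simp
      moreover have "{\<psi> (0,0), \<psi> (1,0), \<psi> (0,2), \<psi> (1,2), \<psi> (0,1), \<psi> (1,1), \<psi> (0,3), \<psi> (1,3)} \<subseteq> \<psi> ` S"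
        unfolding S_def by auto
      ultimately show "a \<in> \<psi> ` S" by blast
    qed
  qed
  have cS: "card S = 8" unfolding S_def by simp
  have "card A = 8" using cardA c4 by simp
  hence "inj_on \<psi> S" using im cS eq_card_imp_inj_on[of S \<psi>] unfolding S_def by simp
  hence bij: "bij_betw \<psi> S A" using im bij_betw_def by blast
  show ?thesis
  proof (rule iso_from[OF bij])
    show "carrier Z2Z4_add = S" by (simp add: Z2Z4_add_def S_def)
    fix p q assume p: "p \<in> S" and q: "q \<in> S"
    show "p \<otimes>\<^bsub>Z2Z4_add\<^esub> q \<in> S \<and> p \<otimes>\<^bsub>Z2Z4_circ\<^esub> q \<in> S"
      using cl[OF p q] arith[OF p q] cl[OF p cl[OF q eS[OF p]]] by simp
    show "\<psi> (p \<otimes>\<^bsub>Z2Z4_add\<^esub> q) = \<psi> p \<oplus> \<psi> q" using hp[OF p q] .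
    show "\<psi> (p \<otimes>\<^bsub>Z2Z4_circ\<^esub> q) = \<psi> p \<cdot> \<psi> q" using hc[OF p q] .
  qed
qed

lemma main_sb1: "brace_iso P C Z4_add Z4_circ \<or> brace_iso P C Z2Z2_add Z2Z2_circ \<or> brace_iso P C Z2Z4_add Z2Z4_circ"
proof -
  have "card I > 0" using z_I finI card_gt_0_iff by blast
  hence ci: "card I = 1 \<or> card I = 2" using card_I_le2 by arith
  have x0x0: "x0 \<oplus> x0 \<in> F" using sq_F x0L by auto
  have vA: "v \<in> A" using vF FA by auto
  show ?thesis
  proof (cases "card I = 1")
    case True
    then obtain i where "I = {i}" using card_1_singletonE by blast
    hence Iz: "I = {z}" using z_I by auto
    have fF: "fm c = z" if "c \<in> F" for c using that Iz unfolding I_def by auto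
    have FF: "F = {z, v}" using F_split Iz vA by auto
    have vz: "v \<noteq> z"
    proof
      assume "v = z"
      hence "F = {z}" using FF by simp
      thus False using cardF_ge2 by simp
    qed
    have fL: "fm c = v" if "c \<in> A - F" for c using fm_L[OF that] fF vA by auto
    have "x0 \<oplus> x0 = z \<or> x0 \<oplus> x0 = v" using x0x0 FF by blast
    thus ?thesis
    proof
      assume "x0 \<oplus> x0 = z"
      thus ?thesis using z2z2_case[OF x0L _ FF vz fF fL] by blast
    next
      assume "x0 \<oplus> x0 = v"
      thus ?thesis using z4_case[OF x0L _ FF vz fF fL] by blast
    qed
  next
    case False
    hence c2: "card I = 2" using ci by auto
    have "card (I - {z}) = 1" using c2 z_I finI by simp
    then obtain u where u: "I - {z} = {u}" using card_1_singletonE by blast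
    hence Izu: "I = {z, u}" "u \<noteq> z" using z_I by auto
    have cK: "card K = 2"
    proof -
      have "card I \<le> card K" using I_K finK card_mono by auto
      moreover have "2 * card K \<le> 4" using IK_le cardF_le c2 by simp
      ultimately show ?thesis using c2 by simp
    qed
    have KI: "K = I" using card_subset_eq[OF finK I_K] cK c2 by simp
    have uF: "u \<in> F" "u \<in> A" using Izu I_F FA by auto
    have fu: "fm u = z" using Izu I_K unfolding K_def by auto
    have Iadd: "i \<oplus> j \<in> I" if ij: "i \<in> I" "j \<in> I" for i j
    proof -
      obtain c d where cd: "c \<in> F" "d \<in> F" "i = fm c" "j = fm d" using ij unfolding I_def by auto
      hence "i \<oplus> j = fm (c \<oplus> d)" using fm_addF FA by simp
      thus ?thesis using cd F_add unfolding I_def by auto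
    qed
    have vK: "v \<notin> K"
    proof
      assume "v \<in> K"
      hence "v \<in> I" using KI by simp
      hence "(\<lambda>i. v \<oplus> i) ` I \<subseteq> I" using Iadd by auto
      hence "F = I" using F_split by auto
      thus False using IK_le cK c2 by simp
    qed
    have fv: "fm v = u"
    proof -
      have "fm v \<in> I" unfolding I_def using vF by auto
      moreover have "fm v \<noteq> z" using vK vF unfolding K_def by auto
      ultimately show ?thesis using Izu by auto
    qed
    have FF: "F = {z, u, v, v \<oplus> u}" using F_split Izu vA by auto
    have c4: "card F = 4" using IK_le cardF_le c2 cK by simp
    have fx: "fm (x0 \<oplus> x0) = u" using fm_sq[OF x0L] fv v_def by simp
    have "x0 \<oplus> x0 \<noteq> z" "x0 \<oplus> x0 \<noteq> u" using fx fm_z fu Izu by auto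
    hence "x0 \<oplus> x0 = v \<or> x0 \<oplus> x0 = v \<oplus> u" using x0x0 FF by blast
    thus ?thesis
    proof
      assume h1: "x0 \<oplus> x0 = v"
      show ?thesis using z2z4_case[OF x0L uF(1) vF h1 FF c4 fu fv v_def[symmetric]] by blast
    next
      assume h: "x0 \<oplus> x0 = v \<oplus> u"
      let ?y = "x0 \<oplus> v" and ?w = "v \<oplus> u"
      have y: "?y \<in> A - F" using L_coset[OF x0L] vF by auto
      have wF: "?w \<in> F" using F_add vF uF by auto
      have vv: "v \<oplus> v = z" using F_sq vF by auto
      have yy: "?y \<oplus> ?y = ?w"
      proof -
        have "?y \<oplus> ?y = (x0 \<oplus> x0) \<oplus> (v \<oplus> v)" using x0A vA by (simp add: P.m_ac)
        thus ?thesis using h vv uF vA by simp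
      qed
      have uu: "u \<oplus> u = z" using F_sq uF by auto
      have vuu: "(v \<oplus> u) \<oplus> u = v" using vA uF by (simp add: P.m_assoc uu)
      have FF': "F = {z, u, ?w, ?w \<oplus> u}" using FF vuu by auto
      have fw: "fm ?w = u" using fm_addF[OF vA uF(1)] fv fu uF by simp
      have fy: "fm ?y = ?w" using fm_addF[OF x0A vF] fv v_def by simp
      show ?thesis using z2z4_case[OF y uF(1) wF yy FF' c4 fu fw fy] by blast
    qed
  qed
qed
end

theorem mainTheorem20:
  fixes P C :: "'a monoid"
  assumes "skew_brace P C"
    and "finite (carrier P)"
    and "comm_group P"
    and "card (theta_vertices P C) = 1"
  shows "brace_iso P C Z4_add Z4_circ
       \<or> brace_iso P C Z2Z2_add Z2Z2_circ
       \<or> brace_iso P C Z2Z4_add Z2Z4_circ"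
proof -
  have sb: "group C" "carrier C = carrier P"
    "\<And>a b c. a \<in> carrier P \<Longrightarrow> b \<in> carrier P \<Longrightarrow> c \<in> carrier P \<Longrightarrow>
     a \<otimes>\<^bsub>C\<^esub> (b \<otimes>\<^bsub>P\<^esub> c) = ((a \<otimes>\<^bsub>C\<^esub> b) \<otimes>\<^bsub>P\<^esub> inv\<^bsub>P\<^esub> a) \<otimes>\<^bsub>P\<^esub> (a \<otimes>\<^bsub>C\<^esub> c)"
    using assms(1) unfolding skew_brace_def by auto
  interpret sb1 P C
    apply (rule sb1.intro)
     apply (rule sbrace.intro)
       apply (rule assms(3))
      apply (rule sb(1))
     apply (rule sbrace_axioms.intro)
       apply (rule sb(2))
      apply (erule (2) sb(3))
     apply (rule assms(2))
    apply (rule sb1_axioms.intro)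
    apply (rule assms(4))
    done
  show ?thesis using main_sb1 .
qed

end
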